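(* Let $\gamma$ be continuous, increasing and concave near the origin, with $\lim_{x\downarrow0}\gamma(x)=0$, and assume $\mathrm{ind}_*(\gamma)>0$. Then $\gamma$ satisfies Condition $(\mathbf{C_{0+}})$: for every $\varepsilon\in(0,1)$ there exist constants $\mathsf{c}_\varepsilon>0$ and $x_\varepsilon>0$ such that $$\int_0^{1/2}\gamma(xy)\frac{dy}{y\sqrt{\log(1/y)}}\le \mathsf{c}_\varepsilon\,(\gamma(x))^{1-\varepsilon}\quad\text{for all }0<x<x_\varepsilon .$$
   Context: $\mathrm{ind}_*(\gamma):=\sup\{\alpha:\gamma(x)=o(x^\alpha)\text{ as }x\downarrow0\}$. *)

theory Defs
  imports "HOL-Analysis.Analysis" "HOL-Library.Landau_Symbols"
begin

definition lower_index :: "(real \<Rightarrow> real) \<Rightarrow> ereal" where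
  "lower_index \<gamma> = (SUP \<alpha> \<in> {\<alpha>::real. \<gamma> \<in> o[at_right 0](\<lambda>x. x powr \<alpha>)}. ereal \<alpha>)"

end

theory Submission
  imports Defs
begin

theorem lemma3p1:
  fixes \<gamma> :: "real \<Rightarrow> real" and \<delta> :: real
  assumes "\<delta> > 0"
    and "continuous_on {0<..<\<delta>} \<gamma>"
    and "mono_on {0<..<\<delta>} \<gamma>"
    and "concave_on {0<..<\<delta>} \<gamma>"
    and "(\<gamma> \<longlongrightarrow> 0) (at_right 0)"
    and "lower_index \<gamma> > 0"
  shows "\<forall>\<epsilon>::real. 0 < \<epsilon> \<and> \<epsilon> < 1 \<longrightarrow>
           (\<exists>c>0. \<exists>x\<^sub>\<epsilon>>0. \<forall>x. 0 < x \<and> x < x\<^sub>\<epsilon> \<longrightarrow>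
              (\<integral>\<^sup>+ y \<in> {0<..1/2}. ennreal (\<gamma> (x * y) / (y * sqrt (ln (1 / y)))) \<partial>lborel)
                \<le> ennreal (c * (\<gamma> x) powr (1 - \<epsilon>)))"
proof (intro allI impI)
  fix \<epsilon> :: real
  assume eps: "0 < \<epsilon> \<and> \<epsilon> < 1"
  obtain \<alpha> where al: "\<gamma> \<in> o[at_right 0](\<lambda>x. x powr \<alpha>)" "0 < \<alpha>"
    using assms(6) unfolding lower_index_def by (auto simp: less_SUP_iff)
  have "eventually (\<lambda>x. norm (\<gamma> x) \<le> 1 * norm (x powr \<alpha>)) (at_right 0)"
    using landau_o.smallD[OF al(1), of 1] by simp
  then obtain \<eta> where eta: "\<eta> > 0" "\<And>u. 0 < u \<Longrightarrow> u < \<eta> \<Longrightarrow> norm (\<gamma> u) \<le> 1 * norm (u powr \<alpha>)"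
    unfolding eventually_at_right_field by auto
  have nonneg: "0 \<le> \<gamma> u" if u: "0 < u" "u < \<delta>" for u
  proof (rule tendsto_upperbound[OF assms(5)])
    show "\<forall>\<^sub>F v in at_right 0. \<gamma> v \<le> \<gamma> u"
      unfolding eventually_at_right_field using u
      by (intro exI[of _ u]) (auto intro!: mono_onD[OF assms(3)])
  qed simp
  define \<beta> where "\<beta> = \<alpha> * \<epsilon>"
  have bpos: "\<beta> > 0" using al eps by (simp add: \<beta>_def)
  define c where "c = 1 / (sqrt (ln 2) * \<beta>)"
  have ln2: "ln (2::real) > 0" by simp
  have cpos: "c > 0" using bpos ln2 by (simp add: c_def)
  show "\<exists>c>0. \<exists>x\<^sub>\<epsilon>>0. \<forall>x. 0 < x \<and> x < x\<^sub>\<epsilon> \<longrightarrow>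
              (\<integral>\<^sup>+ y \<in> {0<..1/2}. ennreal (\<gamma> (x * y) / (y * sqrt (ln (1 / y)))) \<partial>lborel)
                \<le> ennreal (c * (\<gamma> x) powr (1 - \<epsilon>))"
  proof (rule exI[of _ c], rule conjI[OF cpos], rule exI[of _ "min 1 (min \<delta> \<eta>)"], rule conjI)
    show "0 < min 1 (min \<delta> \<eta>)" using assms(1) eta by simp
  next
    show "\<forall>x. 0 < x \<and> x < min 1 (min \<delta> \<eta>) \<longrightarrow>
              (\<integral>\<^sup>+ y \<in> {0<..1/2}. ennreal (\<gamma> (x * y) / (y * sqrt (ln (1 / y)))) \<partial>lborel)
                \<le> ennreal (c * (\<gamma> x) powr (1 - \<epsilon>))"
    proof (intro allI impI)
    fix x assume x: "0 < x \<and> x < min 1 (min \<delta> \<eta>)"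
    define C where "C = (\<gamma> x) powr (1 - \<epsilon>) / sqrt (ln 2)"
    have Cnn: "C \<ge> 0" by (simp add: C_def)
    have pt: "\<gamma> (x * y) / (y * sqrt (ln (1 / y))) \<le> C * y powr (\<beta> - 1)"
      if y: "0 < y" "y \<le> 1/2" for y
    proof -
      have xy: "0 < x * y" "x * y \<le> x" "x * y < \<delta>" "x * y < \<eta>"
      proof -
        have "x * y \<le> x" using x y by (simp add: mult_le_cancel_left1)
        moreover have "0 < x * y" using x y by simp
        ultimately show "0 < x * y" "x * y \<le> x" "x * y < \<delta>" "x * y < \<eta>" using x by linarith+
      qed
      have g0: "0 \<le> \<gamma> (x*y)" using nonneg xy by simp
      have gx: "\<gamma> (x*y) \<le> \<gamma> x" using xy x by (intro mono_onD[OF assms(3)]) auto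
      have gxy: "\<gamma> (x*y) \<le> (x*y) powr \<alpha>" using eta(2)[OF xy(1) xy(4)] g0 by simp
      have "\<gamma> (x*y) \<le> (\<gamma> x) powr (1 - \<epsilon>) * y powr \<beta>"
      proof (cases "\<gamma> (x*y) = 0")
        case True then show ?thesis by simp
      next
        case False
        hence gp: "\<gamma> (x*y) > 0" using g0 by simp
        have "\<gamma> (x*y) = \<gamma> (x*y) powr (1-\<epsilon>) * \<gamma> (x*y) powr \<epsilon>"
          using gp by (simp add: powr_add[symmetric])
        also have "\<dots> \<le> (\<gamma> x) powr (1 - \<epsilon>) * ((x*y) powr \<alpha>) powr \<epsilon>"
          using gp gx gxy eps by (intro mult_mono powr_mono2) auto
        also have "((x*y) powr \<alpha>) powr \<epsilon> = x powr \<beta> * y powr \<beta>"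
          using xy x y by (simp add: powr_powr \<beta>_def powr_mult)
        also have "x powr \<beta> * y powr \<beta> \<le> y powr \<beta>"
          using x bpos by (intro mult_left_le_one_le) (auto simp: powr_le1)
        finally show ?thesis by (simp add: mult_left_mono)
      qed
      moreover have "sqrt (ln 2) \<le> sqrt (ln (1/y))"
      proof -
        have "ln y \<le> ln (1/2)" using y by simp
        also have "ln (1/2::real) = - ln 2" by (simp add: ln_div)
        finally show ?thesis using y by (intro real_sqrt_le_mono) (simp add: ln_div)
      qed
      ultimately have "\<gamma> (x * y) / (y * sqrt (ln (1 / y))) \<le>
          (\<gamma> x) powr (1 - \<epsilon>) * y powr \<beta> / (y * sqrt (ln 2))"
        using y g0 ln2 by (intro frac_le mult_left_mono) auto
      also have "\<dots> = C * y powr (\<beta> - 1)"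
        using y by (simp add: C_def powr_diff field_simps)
      finally show ?thesis .
    qed
    have "(\<integral>\<^sup>+ y \<in> {0<..1/2}. ennreal (\<gamma> (x * y) / (y * sqrt (ln (1 / y)))) \<partial>lborel)
        \<le> (\<integral>\<^sup>+ y. ennreal (C * y powr (\<beta> - 1)) * indicator {0..1} y \<partial>lborel)"
      using pt by (intro nn_integral_mono) (auto simp: indicator_def ennreal_leI)
    also have "\<dots> = ennreal (C * (1 powr (\<beta> - 1 + 1) / (\<beta> - 1 + 1)))"
      using Cnn bpos
      by (intro nn_integral_has_integral_lebesgue' has_integral_mult_right has_integral_powr_from_0) auto
    also have "\<dots> = ennreal (c * (\<gamma> x) powr (1 - \<epsilon>))"
      by (simp add: C_def c_def)
    finally show "(\<integral>\<^sup>+ y \<in> {0<..1/2}. ennreal (\<gamma> (x * y) / (y * sqrt (ln (1 / y)))) \<partial>lborel)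
                \<le> ennreal (c * (\<gamma> x) powr (1 - \<epsilon>))" .
  qed
  qed
qed

end
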